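(* Let $N,h,Q\in\mathbb N$ with $h\to\infty$, $h=o(N)$ and $Q\ll N$ as $N\to\infty$. Let $g:\mathbb N\to\mathbb R$ with $g(q)=0$ for all $q>Q$, and let $f=g\ast\mathbf 1$, i.e. $f(n)=\sum_{d\mid n}g(d)$. Then for every nonzero integer $a\le N$, $$\mathcal C_f(a)=\sum_{\ell\mid a}\ \sum_{\substack{d,q\ge1\\(d,q)=1}}g(\ell d)g(\ell q)\frac1q\left(\left\lfloor\frac{2N}{\ell d}\right\rfloor-\left\lfloor\frac{N}{\ell d}\right\rfloor\right)+R_f(a),$$ where $$R_f(a)=\sum_{\ell\mid a}\ \sum_{\substack{d,q\ge1\\(d,q)=1}}g(\ell d)g(\ell q)\frac1q\sum_{j=1}^{q-1}e_q(-ja/\ell)\sum_{N/(\ell d)<m\le 2N/(\ell d)}e_q(jdm).$$ Moreover, for every even function $K:\mathbb Z\to\mathbb C$ supported in $[-2h,2h]$ with $K(0)=2h$, and $N$ sufficiently large (so that $2h\le N$), $$\sum_{a\ne0}K(a)R_f(a)+K(0)\,\mathcal C_f(0)=\sum_{\ell\le 2h}\ \sum_{\substack{d,q\ge1\\(d,q)=1}}g(\ell d)g(\ell q)\frac1q\sum_{j=1}^{q-1}\ \sum_{N/(\ell d)<m\le 2N/(\ell d)}\cos\frac{2\pi jdm}{q}\sum_{a\ne0}K(a\ell)e_q(ja)+2h\,\mathcal C_f(0).$$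
   Context: $e(\theta)=e^{2\pi i\theta}$ and $e_q(m)=e(m/q)$. $\lfloor\cdot\rfloor$ is the integer part. $\ell\mid a$ ranges over positive divisors $\ell$ of $a$. The notation $n\sim N$ means $N<n\le 2N$, and for integers $a\le N$, $\mathcal C_f(a)=\sum_{n\sim N}f(n)f(n-a)$. *)

theory Defs
  imports "HOL-Analysis.Analysis"
begin

definition e :: "real \<Rightarrow> complex" where
  "e \<theta> = exp (2 * pi * \<i> * complex_of_real \<theta>)"

definition eq :: "nat \<Rightarrow> real \<Rightarrow> complex" where
  "eq q m = e (m / real q)"

text \<open>C_f(a) = sum over N < n <= 2N of f(n) f(n - a)  (used for integers a <= N,
  so that n - a >= 1).\<close>
definition Cf :: "(nat \<Rightarrow> real) \<Rightarrow> nat \<Rightarrow> int \<Rightarrow> real" where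
  "Cf f N a = (\<Sum>n\<in>{N<..2*N}. f n * f (nat (int n - a)))"

definition mrange :: "nat \<Rightarrow> nat \<Rightarrow> nat \<Rightarrow> int set" where
  "mrange N l d = {m::int. real N / real (l*d) < real_of_int m \<and> real_of_int m \<le> 2 * real N / real (l*d)}"

definition posdivs :: "int \<Rightarrow> nat set" where
  "posdivs a = {l::nat. 0 < l \<and> int l dvd a}"

definition cpairs :: "(nat \<times> nat) set" where
  "cpairs = {(d,q). 1 \<le> d \<and> 1 \<le> q \<and> coprime d q}"

definition Rf :: "(nat \<Rightarrow> real) \<Rightarrow> nat \<Rightarrow> int \<Rightarrow> complex" where
  "Rf g N a = (\<Sum>l\<in>posdivs a.
     infsum (\<lambda>(d,q). complex_of_real (g (l*d) * g (l*q) / real q) *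
        (\<Sum>j\<in>{1..<q}. eq q (- (real j * real_of_int a / real l)) *
           (\<Sum>m\<in>mrange N l d. eq q (real j * real d * real_of_int m)))) cpairs)"

end

theory Submission
  imports Defs
begin


lemma infsum_CP:
  fixes H :: "nat\<times>nat \<Rightarrow> 'b::{comm_monoid_add,t2_space}"
  assumes "\<And>d q. (d,q) \<in> cpairs \<Longrightarrow> Q < d \<or> Q < q \<Longrightarrow> H (d,q) = 0"
  shows "infsum H cpairs = sum H (cpairs \<inter> ({1..Q}\<times>{1..Q}))"
proof -
  have "infsum H cpairs = infsum H (cpairs \<inter> ({1..Q}\<times>{1..Q}))"
    apply (rule infsum_cong_neutral)
    using assms by (auto simp: cpairs_def) (meson not_le)+
  also have "\<dots> = sum H (cpairs \<inter> ({1..Q}\<times>{1..Q}))"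
    by (rule infsum_finite) auto
  finally show ?thesis .
qed

lemma e_add: "e x * e y = e (x + y)"
  unfolding e_def by (simp add: exp_add[symmetric] algebra_simps)

lemma e_nat_mult: "e (real j * x) = e x ^ j"
  unfolding e_def by (simp add: exp_of_nat_mult[symmetric] algebra_simps)

lemma e_eq_1: "e x = 1 \<longleftrightarrow> (\<exists>n::int. x = of_int n)"
proof
  assume "e x = 1"
  then obtain n::int where "2 * pi * x = of_int (2*n) * pi"
    unfolding e_def exp_eq_1 by auto
  then have "x = of_int n" by simp
  then show "\<exists>n::int. x = of_int n" by blast
next
  assume "\<exists>n::int. x = of_int n"
  then obtain n::int where "x = of_int n" by blast
  then show "e x = 1" unfolding e_def exp_eq_1 by (auto intro!: exI[of _ n])
qed

lemma char_sum:
  fixes q :: nat and k :: int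
  assumes "q \<ge> 1"
  shows "(\<Sum>j<q. e (real j * real_of_int k / real q)) = (if int q dvd k then of_nat q else 0)"
proof -
  define w where "w = e (real_of_int k / real q)"
  have pw: "e (real j * real_of_int k / real q) = w ^ j" for j
    unfolding w_def using e_nat_mult[of j "real_of_int k / real q"] by simp
  have wq: "w ^ q = 1"
  proof -
    have "w ^ q = e (real q * (real_of_int k / real q))" unfolding w_def by (rule e_nat_mult[symmetric])
    also have "real q * (real_of_int k / real q) = real_of_int k" using assms by simp
    finally show ?thesis using e_eq_1 by auto
  qed
  show ?thesis
  proof (cases "int q dvd k")
    case True
    then obtain t where t: "k = int q * t" by blast
    have "w = 1" unfolding w_def e_eq_1 using assms t by (auto intro!: exI[of _ t])
    then show ?thesis using True pw by simp
  next
    case False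
    have "w \<noteq> 1"
    proof
      assume "w = 1"
      then obtain n::int where n: "real_of_int k / real q = of_int n" unfolding w_def e_eq_1 by blast
      then have "real_of_int k = real_of_int (int q * n)" using assms by (simp add: field_simps)
      then have "k = int q * n" by linarith
      then show False using False by simp
    qed
    then show ?thesis using False pw wq geometric_sum[of w q] by simp
  qed
qed

lemma mrange_eq: "mrange N l d = {\<lfloor>real N / real (l*d)\<rfloor><..\<lfloor>2 * real N / real (l*d)\<rfloor>}"
  unfolding mrange_def by (auto simp: floor_less_iff le_floor_iff)

lemma mrange_card: "card (mrange N l d) = nat (\<lfloor>2 * real N / real (l*d)\<rfloor> - \<lfloor>real N / real (l*d)\<rfloor>)"
  unfolding mrange_eq by simp

lemma mrange_floor: "real_of_int (\<lfloor>2 * real N / real (l*d)\<rfloor> - \<lfloor>real N / real (l*d)\<rfloor>) = real (card (mrange N l d))"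
proof -
  have "real N / real (l*d) \<le> 2 * real N / real (l*d)" by (simp add: divide_right_mono)
  then have "\<lfloor>real N / real (l*d)\<rfloor> \<le> \<lfloor>2 * real N / real (l*d)\<rfloor>" by (rule floor_mono)
  then show ?thesis unfolding mrange_card by simp
qed

lemma finite_mrange[simp]: "finite (mrange N l d)"
  unfolding mrange_eq by simp



lemma term_combine:
  fixes l d q :: nat and a :: int and G :: real
  assumes l: "l \<ge> 1" and ld: "int l dvd a" and q: "q \<ge> 1"
  shows "complex_of_real (G / real q * real_of_int (\<lfloor>2 * real N / real (l*d)\<rfloor> - \<lfloor>real N / real (l*d)\<rfloor>))
     + complex_of_real (G / real q) * (\<Sum>j\<in>{1..<q}. eq q (- (real j * real_of_int a / real l)) *
           (\<Sum>m\<in>mrange N l d. eq q (real j * real d * real_of_int m)))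
   = complex_of_real (G * real (card {m \<in> mrange N l d. int q dvd int d * m - a div int l}))"
proof -
  define b where "b = a div int l"
  have ab: "a = int l * b" using ld unfolding b_def by simp
  have ra: "real_of_int a / real l = real_of_int b" using l ab by simp
  have eqm: "eq q (- (real j * real_of_int a / real l)) * eq q (real j * real d * real_of_int m)
      = e (real j * real_of_int (int d * m - b) / real q)" for j m
    unfolding eq_def e_add
  proof -
    have "- (real j * real_of_int a / real l) / real q + real j * real d * real_of_int m / real q
        = real j * real_of_int (int d * m - b) / real q"
    proof -
      have "real j * real_of_int a / real l = real j * real_of_int b" using ra by (metis times_divide_eq_right)
      then show ?thesis by (simp add: diff_divide_distrib add_divide_distrib algebra_simps)
    qed
    then show "e (- (real j * real_of_int a / real l) / real q + real j * real d * real_of_int m / real q)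
        = e (real j * real_of_int (int d * m - b) / real q)" by simp
  qed
  define X where "X j = (\<Sum>m\<in>mrange N l d. e (real j * real_of_int (int d * m - b) / real q))" for j
  have S1: "(\<Sum>j\<in>{1..<q}. eq q (- (real j * real_of_int a / real l)) *
           (\<Sum>m\<in>mrange N l d. eq q (real j * real d * real_of_int m))) = (\<Sum>j\<in>{1..<q}. X j)"
    unfolding X_def by (simp add: sum_distrib_left eqm)
  have X0: "X 0 = of_nat (card (mrange N l d))"
    unfolding X_def by (simp add: e_def)
  have lq: "{..<q} = insert 0 {1..<q}" using q by auto
  have "(\<Sum>j<q. X j) = X 0 + (\<Sum>j\<in>{1..<q}. X j)" unfolding lq by simp
  also have "(\<Sum>j<q. X j) = (\<Sum>m\<in>mrange N l d. \<Sum>j<q. e (real j * real_of_int (int d * m - b) / real q))"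
    unfolding X_def by (rule sum.swap)
  also have "\<dots> = (\<Sum>m\<in>mrange N l d. if int q dvd int d * m - b then of_nat q else 0)"
    by (rule sum.cong[OF refl], rule char_sum[OF q])
  also have "\<dots> = of_nat q * of_nat (card {m \<in> mrange N l d. int q dvd int d * m - b})"
    by (simp add: sum.If_cases Int_def conj_commute)
  finally have main: "X 0 + (\<Sum>j\<in>{1..<q}. X j) = of_nat q * of_nat (card {m \<in> mrange N l d. int q dvd int d * m - b})" ..
  define C where "C = card {m \<in> mrange N l d. int q dvd int d * m - b}"
  have "complex_of_real (G / real q * real (card (mrange N l d))) + complex_of_real (G / real q) * (\<Sum>j\<in>{1..<q}. X j)
     = complex_of_real (G / real q) * (X 0 + (\<Sum>j\<in>{1..<q}. X j))"
    by (simp add: X0 distrib_left)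
  also have "\<dots> = complex_of_real (G / real q) * (of_nat q * of_nat C)" unfolding main C_def ..
  also have "\<dots> = complex_of_real (G * real C)" using q by simp
  finally show ?thesis
    unfolding S1 mrange_floor b_def[symmetric] C_def .
qed



lemma f_expand:
  fixes g f :: "nat \<Rightarrow> real"
  assumes g_supp: "\<forall>q>Q. g q = 0"
    and f_def: "\<forall>n>0. f n = (\<Sum>d | d dvd n. g d)"
    and n: "n > 0"
  shows "f n = (\<Sum>d\<in>{1..Q}. if d dvd n then g d else 0)"
proof -
  have fin: "finite {d. d dvd n}" using n by simp
  have "(\<Sum>d\<in>{1..Q}. if d dvd n then g d else 0) = (\<Sum>d\<in>{1..Q} \<inter> {d. d dvd n}. g d)"
    by (simp add: sum.inter_restrict)
  also have "\<dots> = (\<Sum>d | d dvd n. g d)"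
    apply (rule sum.mono_neutral_left[OF fin])
    using g_supp n apply (auto simp: not_le)
    apply (meson Suc_leI dvd_pos_nat)
    by (meson not_le)
  finally show ?thesis using f_def n by simp
qed

lemma nat_dvd_int: "k \<ge> 0 \<Longrightarrow> (d dvd nat k) = (int d dvd k)"
  by (metis int_nat_eq of_nat_dvd_iff)

lemma Cf_expand:
  fixes g f :: "nat \<Rightarrow> real" and a :: int
  assumes g_supp: "\<forall>q>Q. g q = 0"
    and f_def: "\<forall>n>0. f n = (\<Sum>d | d dvd n. g d)"
    and a: "a \<le> int N"
  shows "Cf f N a = (\<Sum>p\<in>{1..Q}\<times>{1..Q}. g (fst p) * g (snd p) *
           real (card {n\<in>{N<..2*N}. fst p dvd n \<and> int (snd p) dvd int n - a}))"
proof -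
  have "Cf f N a = (\<Sum>n\<in>{N<..2*N}. \<Sum>p\<in>{1..Q}\<times>{1..Q}.
          (if fst p dvd n \<and> int (snd p) dvd int n - a then g (fst p) * g (snd p) else 0))"
    unfolding Cf_def
  proof (rule sum.cong[OF refl])
    fix n assume n: "n \<in> {N<..2*N}"
    then have n0: "n > 0" and na: "int n - a > 0" using a by auto
    have "f n * f (nat (int n - a)) = (\<Sum>d1\<in>{1..Q}. if d1 dvd n then g d1 else 0) *
        (\<Sum>d2\<in>{1..Q}. if d2 dvd nat (int n - a) then g d2 else 0)"
      using f_expand[OF g_supp f_def n0] f_expand[OF g_supp f_def, of "nat (int n - a)"] na by simp
    also have "\<dots> = (\<Sum>d1\<in>{1..Q}. \<Sum>d2\<in>{1..Q}. (if d1 dvd n then g d1 else 0) * (if d2 dvd nat (int n - a) then g d2 else 0))"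
      by (rule sum_product)
    also have "\<dots> = (\<Sum>p\<in>{1..Q}\<times>{1..Q}. (if fst p dvd n then g (fst p) else 0) * (if snd p dvd nat (int n - a) then g (snd p) else 0))"
      by (subst sum.cartesian_product) (simp add: case_prod_beta)
    also have "\<dots> = (\<Sum>p\<in>{1..Q}\<times>{1..Q}.
          (if fst p dvd n \<and> int (snd p) dvd int n - a then g (fst p) * g (snd p) else 0))"
      using na by (intro sum.cong refl) (auto simp: nat_dvd_int)
    finally show "f n * f (nat (int n - a)) = \<dots>" .
  qed
  also have "\<dots> = (\<Sum>p\<in>{1..Q}\<times>{1..Q}. \<Sum>n\<in>{N<..2*N}.
          (if fst p dvd n \<and> int (snd p) dvd int n - a then g (fst p) * g (snd p) else 0))"
    by (rule sum.swap)
  also have "\<dots> = (\<Sum>p\<in>{1..Q}\<times>{1..Q}. g (fst p) * g (snd p) *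
           real (card {n\<in>{N<..2*N}. fst p dvd n \<and> int (snd p) dvd int n - a}))"
    by (intro sum.cong refl) (simp add: sum.If_cases Int_def conj_commute)
  finally show ?thesis .
qed



lemma mrange_iff:
  assumes "l * d > 0"
  shows "m \<in> mrange N l d \<longleftrightarrow> int N < int (l*d) * m \<and> int (l*d) * m \<le> 2 * int N"
proof -
  have p: "real (l*d) > 0" using assms by simp
  have "m \<in> mrange N l d \<longleftrightarrow> real N < real (l*d) * real_of_int m \<and> real (l*d) * real_of_int m \<le> 2 * real N"
    unfolding mrange_def using p by (simp add: pos_divide_less_eq pos_le_divide_eq mult.commute)
  also have "\<dots> \<longleftrightarrow> int N < int (l*d) * m \<and> int (l*d) * m \<le> 2 * int N"
  proof -
    have e1: "real (l*d) * real_of_int m = real_of_int (int (l*d) * m)" by simp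
    show ?thesis unfolding e1
      by (metis of_int_less_iff of_int_le_iff of_int_of_nat_eq of_int_mult of_int_numeral)
  qed
  finally show ?thesis .
qed

lemma card_eq:
  fixes l d q :: nat and a :: int
  assumes l: "l \<ge> 1" and d: "d \<ge> 1" and la: "int l dvd a"
  shows "card {m \<in> mrange N l d. int q dvd int d * m - a div int l}
       = card {n\<in>{N<..2*N}. (l*d) dvd n \<and> int (l*q) dvd int n - a}"
proof -
  define b where "b = a div int l"
  have ab: "a = int l * b" using la unfolding b_def by simp
  have ld0: "l * d > 0" using l d by simp
  let ?M = "{m \<in> mrange N l d. int q dvd int d * m - b}"
  let ?N = "{n\<in>{N<..2*N}. (l*d) dvd n \<and> int (l*q) dvd int n - a}"
  let ?phi = "\<lambda>m::int. nat (int (l*d) * m)"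
  have key: "int n - a = int l * (int d * m - b)" if "int n = int (l*d) * m" for n m
    using that ab by (simp add: algebra_simps)
  have l0: "int l \<noteq> 0" using l by simp
  have inj: "inj_on ?phi ?M"
  proof (rule inj_onI)
    fix x y assume x: "x \<in> ?M" and y: "y \<in> ?M" and e: "?phi x = ?phi y"
    have "int (l*d) * x > 0" "int (l*d) * y > 0" using x y mrange_iff[OF ld0] by fastforce+
    then have "int (l*d) * x = int (l*d) * y" using e by (metis nat_eq_iff2 order_less_imp_le)
    then show "x = y" using ld0 by simp
  qed
  have img: "?N = ?phi ` ?M"
  proof
    show "?N \<subseteq> ?phi ` ?M"
    proof
      fix n assume n: "n \<in> ?N"
      then obtain k where k: "n = l * d * k" by blast
      have nn: "int n = int (l*d) * int k" using k by simp
      have "int l * int q dvd int l * (int d * int k - b)"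
        using n key[OF nn] by simp
      then have "int q dvd int d * int k - b" using l0 by (simp add: dvd_times_left_cancel_iff)
      moreover have "int k \<in> mrange N l d" using n nn mrange_iff[OF ld0] by auto
      ultimately have "int k \<in> ?M" by simp
      moreover have "n = ?phi (int k)" using nn by simp
      ultimately show "n \<in> ?phi ` ?M" by blast
    qed
  next
    show "?phi ` ?M \<subseteq> ?N"
    proof
      fix n assume "n \<in> ?phi ` ?M"
      then obtain m where m: "m \<in> ?M" and nm: "n = ?phi m" by blast
      have rng: "int N < int (l*d) * m" "int (l*d) * m \<le> 2 * int N" using m mrange_iff[OF ld0] by auto
      then have nn: "int n = int (l*d) * m" using nm by simp
      have "N < n" "n \<le> 2 * N" using rng nn by linarith+
      moreover have "int (l*d) dvd int n" using nn by simp
      then have "(l*d) dvd n" by (simp only: of_nat_dvd_iff)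
      moreover have "int (l*q) dvd int n - a"
        using key[OF nn] m by simp
      ultimately show "n \<in> ?N" by simp
    qed
  qed
  show ?thesis unfolding b_def[symmetric] img using card_image[OF inj] by simp
qed



lemma finite_posdivs: "a \<noteq> 0 \<Longrightarrow> finite (posdivs a)"
proof -
  assume a: "a \<noteq> 0"
  have "posdivs a \<subseteq> {1..nat \<bar>a\<bar>}"
  proof
    fix l assume "l \<in> posdivs a"
    then have "0 < l" "int l dvd a" unfolding posdivs_def by auto
    then have "int l \<le> \<bar>a\<bar>" using dvd_imp_le_int[of a "int l"] a by simp
    then show "l \<in> {1..nat \<bar>a\<bar>}" using \<open>0 < l\<close> by auto
  qed
  then show ?thesis by (rule finite_subset) simp
qed

lemma reindex:
  fixes a :: int and H :: "nat \<times> nat \<Rightarrow> real"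
  assumes a: "a \<noteq> 0"
    and Hz: "\<And>d1 d2. d1 > Q \<or> d2 > Q \<Longrightarrow> H (d1,d2) = 0"
    and Hg: "\<And>d1 d2. d1 \<ge> 1 \<Longrightarrow> d2 \<ge> 1 \<Longrightarrow> \<not> int (gcd d1 d2) dvd a \<Longrightarrow> H (d1,d2) = 0"
  shows "(\<Sum>l\<in>posdivs a. \<Sum>p\<in>cpairs \<inter> ({1..Q}\<times>{1..Q}). H (l * fst p, l * snd p))
       = (\<Sum>p\<in>{1..Q}\<times>{1..Q}. H p)"
proof -
  define P where "P = posdivs a"
  define CP where "CP = cpairs \<inter> ({1..Q}\<times>{1..Q})"
  define phi where "phi = (\<lambda>x::nat\<times>nat\<times>nat. (fst x * fst (snd x), fst x * snd (snd x)))"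
  define D where "D = {x \<in> P \<times> CP. fst x * fst (snd x) \<le> Q \<and> fst x * snd (snd x) \<le> Q}"
  have finP: "finite P" unfolding P_def using a by (rule finite_posdivs)
  have finCP: "finite CP" unfolding CP_def by auto
  have "(\<Sum>l\<in>P. \<Sum>p\<in>CP. H (l * fst p, l * snd p)) = (\<Sum>x\<in>P \<times> CP. H (phi x))"
    unfolding phi_def by (subst sum.cartesian_product) (simp add: case_prod_beta)
  also have "\<dots> = (\<Sum>x\<in>D. H (phi x))"
    apply (rule sum.mono_neutral_right)
    using finP finCP apply simp
     apply (simp add: D_def)
    using Hz by (auto simp: D_def phi_def not_le)
  finally have s1: "(\<Sum>l\<in>P. \<Sum>p\<in>CP. H (l * fst p, l * snd p)) = (\<Sum>x\<in>D. H (phi x))" .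
  have inj: "inj_on phi D"
  proof (rule inj_onI)
    fix x y assume x: "x \<in> D" and y: "y \<in> D" and e: "phi x = phi y"
    obtain l d q where xx: "x = (l,d,q)" by (cases x) auto
    obtain l' d' q' where yy: "y = (l',d',q')" by (cases y) auto
    have cx: "coprime d q" "l \<ge> 1" using x xx by (auto simp: D_def CP_def cpairs_def P_def posdivs_def)
    have cy: "coprime d' q'" "l' \<ge> 1" using y yy by (auto simp: D_def CP_def cpairs_def P_def posdivs_def)
    have e1: "l * d = l' * d'" "l * q = l' * q'" using e xx yy by (auto simp: phi_def)
    have "gcd (l*d) (l*q) = l" using cx by (simp add: gcd_mult_left)
    moreover have "gcd (l'*d') (l'*q') = l'" using cy by (simp add: gcd_mult_left)
    ultimately have "l = l'" using e1 by simp
    then show "x = y" using e1 xx yy cx by auto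
  qed
  have s2: "(\<Sum>x\<in>D. H (phi x)) = (\<Sum>y\<in>phi ` D. H y)" by (simp add: sum.reindex[OF inj] comp_def)
  have s3: "(\<Sum>y\<in>phi ` D. H y) = (\<Sum>p\<in>{1..Q}\<times>{1..Q}. H p)"
  proof (rule sum.mono_neutral_left)
    show "finite ({1..Q}\<times>{1..Q})" by simp
    show "phi ` D \<subseteq> {1..Q}\<times>{1..Q}"
    proof
      fix y assume "y \<in> phi ` D"
      then obtain l d q where "(l,d,q) \<in> D" "y = (l*d, l*q)" unfolding phi_def by auto
      then show "y \<in> {1..Q}\<times>{1..Q}" by (auto simp: D_def CP_def cpairs_def P_def posdivs_def)
    qed
    show "\<forall>i\<in>{1..Q}\<times>{1..Q} - phi ` D. H i = 0"
    proof
      fix y assume y: "y \<in> {1..Q}\<times>{1..Q} - phi ` D"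
      obtain d1 d2 where yy: "y = (d1,d2)" by (cases y) auto
      have d: "1 \<le> d1" "d1 \<le> Q" "1 \<le> d2" "d2 \<le> Q" using y yy by auto
      show "H y = 0"
      proof (cases "int (gcd d1 d2) dvd a")
        case False then show ?thesis using Hg d yy by simp
      next
        case True
        define l where "l = gcd d1 d2"
        have l0: "l > 0" using d unfolding l_def by simp
        define dd where "dd = d1 div l"
        define qq where "qq = d2 div l"
        have e1: "d1 = l * dd" "d2 = l * qq" unfolding dd_def qq_def l_def by auto
        have cop: "coprime dd qq" unfolding dd_def qq_def l_def
          using d by (intro div_gcd_coprime) auto
        have "dd \<ge> 1" "qq \<ge> 1" using e1 d by (auto intro: Suc_leI simp: gr0I)
        moreover have "dd \<le> d1" "qq \<le> d2" using e1 l0 by simp_all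
        then have "dd \<le> Q" "qq \<le> Q" using d by simp_all
        ultimately have "(l, dd, qq) \<in> D" using True l0 cop d e1
          unfolding D_def CP_def cpairs_def P_def posdivs_def l_def by auto
        moreover have "phi (l,dd,qq) = y" using e1 yy unfolding phi_def by simp
        ultimately show ?thesis using y by blast
      qed
    qed
  qed
  show ?thesis using s1 s2 s3 unfolding P_def CP_def by simp
qed



lemma part1:
  fixes N Q :: nat and g f :: "nat \<Rightarrow> real" and a :: int
  assumes g_supp: "\<forall>q>Q. g q = 0"
    and f_def: "\<forall>n>0. f n = (\<Sum>d | d dvd n. g d)"
    and a0: "a \<noteq> 0" and aN: "a \<le> int N"
  shows "complex_of_real (Cf f N a) =
              (\<Sum>l\<in>posdivs a.
                 infsum (\<lambda>(d,q). complex_of_real (g (l*d) * g (l*q) / real q *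
                    real_of_int (\<lfloor>2 * real N / real (l*d)\<rfloor> - \<lfloor>real N / real (l*d)\<rfloor>))) cpairs)
              + Rf g N a"
proof -
  define CP where "CP = cpairs \<inter> ({1..Q}\<times>{1..Q})"
  define H where "H = (\<lambda>p::nat\<times>nat. g (fst p) * g (snd p) *
           real (card {n\<in>{N<..2*N}. fst p dvd n \<and> int (snd p) dvd int n - a}))"
  define T1 where "T1 l = (\<lambda>(d,q). complex_of_real (g (l*d) * g (l*q) / real q *
                    real_of_int (\<lfloor>2 * real N / real (l*d)\<rfloor> - \<lfloor>real N / real (l*d)\<rfloor>)))" for l
  define T2 where "T2 l = (\<lambda>(d::nat,q::nat). complex_of_real (g (l*d) * g (l*q) / real q) *
        (\<Sum>j\<in>{1..<q}. eq q (- (real j * real_of_int a / real l)) *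
           (\<Sum>m\<in>mrange N l d. eq q (real j * real d * real_of_int m))))" for l
  have gz: "g (l*x) = 0" if "l \<ge> 1" "x > Q" for l x
  proof -
    have "x \<le> l * x" using that by simp
    then have "l * x > Q" using that by linarith
    then show ?thesis using g_supp by simp
  qed
  have I1: "infsum (T1 l) cpairs = sum (T1 l) CP" if "l \<in> posdivs a" for l
    unfolding CP_def using that gz by (intro infsum_CP) (auto simp: T1_def posdivs_def)
  have I2: "infsum (T2 l) cpairs = sum (T2 l) CP" if "l \<in> posdivs a" for l
    unfolding CP_def using that gz by (intro infsum_CP) (auto simp: T2_def posdivs_def)
  have comb: "T1 l p + T2 l p = complex_of_real (H (l * fst p, l * snd p))"
    if l: "l \<in> posdivs a" and p: "p \<in> CP" for l p
  proof -
    obtain d q where pp: "p = (d,q)" by (cases p) auto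
    have l1: "l \<ge> 1" and la: "int l dvd a" using l by (auto simp: posdivs_def)
    have d1: "d \<ge> 1" and q1: "q \<ge> 1" using p pp by (auto simp: CP_def cpairs_def)
    show ?thesis
      unfolding pp T1_def T2_def H_def prod.case fst_conv snd_conv
      using term_combine[OF l1 la q1, of "g (l*d) * g (l*q)" N d] card_eq[OF l1 d1 la, of N q]
      by simp
  qed
  have "(\<Sum>l\<in>posdivs a. infsum (T1 l) cpairs) + Rf g N a
      = (\<Sum>l\<in>posdivs a. sum (T1 l) CP + sum (T2 l) CP)"
    unfolding Rf_def T2_def[symmetric] by (simp add: I1 I2 sum.distrib)
  also have "\<dots> = (\<Sum>l\<in>posdivs a. \<Sum>p\<in>CP. complex_of_real (H (l * fst p, l * snd p)))"
    by (intro sum.cong refl) (simp add: sum.distrib[symmetric] comb)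
  also have "\<dots> = complex_of_real (\<Sum>l\<in>posdivs a. \<Sum>p\<in>CP. H (l * fst p, l * snd p))"
    by simp
  also have "(\<Sum>l\<in>posdivs a. \<Sum>p\<in>CP. H (l * fst p, l * snd p)) = (\<Sum>p\<in>{1..Q}\<times>{1..Q}. H p)"
    unfolding CP_def
  proof (rule reindex[OF a0])
    fix d1 d2 :: nat assume "d1 > Q \<or> d2 > Q"
    then show "H (d1,d2) = 0" unfolding H_def using g_supp by auto
  next
    fix d1 d2 :: nat assume nd: "\<not> int (gcd d1 d2) dvd a"
    have "{n\<in>{N<..2*N}. d1 dvd n \<and> int d2 dvd int n - a} = {}"
    proof (rule ccontr)
      assume "{n\<in>{N<..2*N}. d1 dvd n \<and> int d2 dvd int n - a} \<noteq> {}"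
      then obtain n where n: "d1 dvd n" "int d2 dvd int n - a" by auto
      have "int (gcd d1 d2) dvd int n" using n(1) by (simp add: dvd_trans[OF gcd_dvd1])
      moreover have "int (gcd d1 d2) dvd int n - a"
        using n(2) by (metis dvd_trans gcd_dvd2 of_nat_dvd_iff)
      ultimately have "int (gcd d1 d2) dvd int n - (int n - a)" by (rule dvd_diff)
      then have "int (gcd d1 d2) dvd a" by simp
      then show False using nd by simp
    qed
    then show "H (d1,d2) = 0" unfolding H_def by simp
  qed
  also have "(\<Sum>p\<in>{1..Q}\<times>{1..Q}. H p) = Cf f N a"
    unfolding H_def using Cf_expand[OF g_supp f_def aN] by simp
  finally show ?thesis unfolding T1_def by simp
qed



lemma cos_e: "complex_of_real (cos (2*pi*x)) = (e x + e (-x)) / 2"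
  unfolding e_def cos_of_real[symmetric] cos_exp_eq
  by (simp add: algebra_simps)

lemma sum_refl:
  fixes F :: "int \<Rightarrow> 'b::comm_monoid_add"
  assumes "\<And>b. b \<in> B \<Longrightarrow> -b \<in> B"
  shows "(\<Sum>b\<in>B. F (-b)) = (\<Sum>b\<in>B. F b)"
  by (rule sum.reindex_bij_witness[of _ uminus uminus]) (auto simp: assms)

lemma eq_refl: "q \<ge> 1 \<Longrightarrow> j \<le> q \<Longrightarrow> eq q (real (q - j) * real_of_int t) = eq q (- (real j * real_of_int t))"
proof -
  assume q: "q \<ge> 1" and j: "j \<le> q"
  have "real (q - j) * real_of_int t / real q = real_of_int t + (- (real j * real_of_int t) / real q)"
    using q j by (simp add: of_nat_diff field_simps)
  then have "e (real (q - j) * real_of_int t / real q) = e (real_of_int t) * e (- (real j * real_of_int t) / real q)"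
    by (simp add: e_add)
  also have "e (real_of_int t) = 1" using e_eq_1 by blast
  finally show ?thesis unfolding eq_def by simp
qed

lemma inner:
  fixes K :: "int \<Rightarrow> complex" and B R :: "int set" and l d q :: nat and c :: complex
  assumes symB: "\<And>b. b \<in> B \<Longrightarrow> -b \<in> B" and Keven: "\<And>a. K (-a) = K a"
    and l: "l \<ge> 1" and q: "q \<ge> 1"
  shows "(\<Sum>b\<in>B. K (int l * b) * (c * (\<Sum>j\<in>{1..<q}. eq q (- (real j * real_of_int (int l * b) / real l)) *
            (\<Sum>m\<in>R. eq q (real j * real d * real_of_int m)))))
   = c * (\<Sum>j\<in>{1..<q}. \<Sum>m\<in>R. complex_of_real (cos (2 * pi * real j * real d * real_of_int m / real q)) *
            (\<Sum>b\<in>B. K (b * int l) * eq q (real j * real_of_int b)))"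
proof -
  define U where "U j = (\<Sum>b\<in>B. K (b * int l) * eq q (real j * real_of_int b))" for j :: nat
  define Mf where "Mf j = (\<Sum>m\<in>R. eq q (real j * real d * real_of_int m))" for j :: nat
  define Mn where "Mn j = (\<Sum>m\<in>R. eq q (- (real j * real d * real_of_int m)))" for j :: nat
  have e1: "real j * real_of_int (int l * b) / real l = real j * real_of_int b" for j b
    using l by simp
  have U': "(\<Sum>b\<in>B. K (int l * b) * eq q (- (real j * real_of_int b))) = U j" for j
  proof -
    have "(\<Sum>b\<in>B. K (int l * b) * eq q (- (real j * real_of_int b)))
        = (\<Sum>b\<in>B. K ((- b) * int l) * eq q (real j * real_of_int (- b)))"
      by (intro sum.cong refl) (metis Keven minus_mult_left mult.commute of_int_minus mult_minus_right)
    also have "\<dots> = U j" unfolding U_def by (rule sum_refl[OF symB, where F = "\<lambda>b. K (b * int l) * eq q (real j * real_of_int b)"])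
    finally show ?thesis .
  qed
  have step1: "(\<Sum>b\<in>B. K (int l * b) * (c * (\<Sum>j\<in>{1..<q}. eq q (- (real j * real_of_int (int l * b) / real l)) *
            (\<Sum>m\<in>R. eq q (real j * real d * real_of_int m)))))
      = (\<Sum>b\<in>B. \<Sum>j\<in>{1..<q}. c * (Mf j * (K (int l * b) * eq q (- (real j * real_of_int b)))))"
    unfolding e1 Mf_def by (intro sum.cong refl) (simp add: sum_distrib_left mult_ac)
  also have "\<dots> = (\<Sum>j\<in>{1..<q}. \<Sum>b\<in>B. c * (Mf j * (K (int l * b) * eq q (- (real j * real_of_int b)))))"
    by (rule sum.swap)
  also have "\<dots> = c * (\<Sum>j\<in>{1..<q}. Mf j * U j)"
    by (simp add: sum_distrib_left[symmetric] U')
  finally have S1: "(\<Sum>b\<in>B. K (int l * b) * (c * (\<Sum>j\<in>{1..<q}. eq q (- (real j * real_of_int (int l * b) / real l)) *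
            (\<Sum>m\<in>R. eq q (real j * real d * real_of_int m))))) = c * (\<Sum>j\<in>{1..<q}. Mf j * U j)" .
  have Uq: "U (q - j) = U j" if "j \<le> q" for j
  proof -
    have "U (q - j) = (\<Sum>b\<in>B. K (int l * b) * eq q (- (real j * real_of_int b)))"
      unfolding U_def using eq_refl[OF q that] by (simp add: mult.commute)
    then show ?thesis using U' by simp
  qed
  have Mq: "Mf (q - j) = Mn j" if "j \<le> q" for j
    unfolding Mf_def Mn_def
  proof (intro sum.cong refl)
    fix m
    show "eq q (real (q - j) * real d * real_of_int m) = eq q (- (real j * real d * real_of_int m))"
      using eq_refl[OF q that, of "int d * m"] by (simp add: mult.assoc)
  qed
  have swap: "(\<Sum>j\<in>{1..<q}. Mf j * U j) = (\<Sum>j\<in>{1..<q}. Mn j * U j)"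
  proof -
    have "(\<Sum>j\<in>{1..<q}. Mf j * U j) = (\<Sum>j\<in>{1..<q}. Mf (q - j) * U (q - j))"
      by (rule sum.reindex_bij_witness[of _ "\<lambda>j. q - j" "\<lambda>j. q - j"]) auto
    also have "\<dots> = (\<Sum>j\<in>{1..<q}. Mn j * U j)"
      by (intro sum.cong refl) (simp add: Mq Uq)
    finally show ?thesis .
  qed
  have avg: "(Mf j + Mn j) / 2 = (\<Sum>m\<in>R. complex_of_real (cos (2 * pi * real j * real d * real_of_int m / real q)))" for j
  proof -
    have "complex_of_real (cos (2 * pi * real j * real d * real_of_int m / real q))
        = (eq q (real j * real d * real_of_int m) + eq q (- (real j * real d * real_of_int m))) / 2" for m
      using cos_e[of "real j * real d * real_of_int m / real q"] unfolding eq_def by (simp add: mult.assoc)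
    note cm = this
    have "(Mf j + Mn j) / 2 = (\<Sum>m\<in>R. (eq q (real j * real d * real_of_int m) + eq q (- (real j * real d * real_of_int m))) / 2)"
      unfolding Mf_def Mn_def by (simp add: sum.distrib sum_divide_distrib add_divide_distrib)
    then show ?thesis by (simp only: cm)
  qed
  have "(\<Sum>j\<in>{1..<q}. Mf j * U j) = ((\<Sum>j\<in>{1..<q}. Mf j * U j) + (\<Sum>j\<in>{1..<q}. Mn j * U j)) / 2"
    using swap by simp
  also have "\<dots> = (\<Sum>j\<in>{1..<q}. ((Mf j + Mn j) / 2) * U j)"
    by (simp add: sum.distrib[symmetric] sum_divide_distrib distrib_right)
  also have "\<dots> = (\<Sum>j\<in>{1..<q}. \<Sum>m\<in>R. complex_of_real (cos (2 * pi * real j * real d * real_of_int m / real q)) * U j)"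
    by (simp add: avg sum_distrib_right)
  finally show ?thesis unfolding S1 U_def by simp
qed



lemma part2:
  fixes N h Q :: nat and g :: "nat \<Rightarrow> real" and K :: "int \<Rightarrow> complex"
  assumes g_supp: "\<forall>q>Q. g q = 0"
    and Keven: "\<forall>a. K (-a) = K a" and Ksupp: "\<forall>a. \<bar>a\<bar> > 2 * int h \<longrightarrow> K a = 0"
  shows "infsum (\<lambda>a. K a * Rf g N a) {a. a \<noteq> 0} =
              (\<Sum>l\<in>{1..2*h}.
                 infsum (\<lambda>(d,q). complex_of_real (g (l*d) * g (l*q) / real q) *
                   (\<Sum>j\<in>{1..<q}. \<Sum>m\<in>mrange N l d.
                      complex_of_real (cos (2 * pi * real j * real d * real_of_int m / real q)) *
                      infsum (\<lambda>a. K (a * int l) * eq q (real j * real_of_int a)) {a. a \<noteq> 0})) cpairs)"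
proof -
  define CP where "CP = cpairs \<inter> ({1..Q}\<times>{1..Q})"
  define A where "A = {-(2 * int h)..2 * int h} - {0}"
  define B where "B l = {b::int. b \<noteq> 0 \<and> \<bar>int l * b\<bar> \<le> 2 * int h}" for l :: nat
  define T2 where "T2 l a = (\<lambda>(d::nat,q::nat). complex_of_real (g (l*d) * g (l*q) / real q) *
        (\<Sum>j\<in>{1..<q}. eq q (- (real j * real_of_int a / real l)) *
           (\<Sum>m\<in>mrange N l d. eq q (real j * real d * real_of_int m))))" for l a
  have gz: "g (l*x) = 0" if "l \<ge> 1" "x > Q" for l x
  proof -
    have "x \<le> l * x" using that by simp
    then have "l * x > Q" using that by linarith
    then show ?thesis using g_supp by simp
  qed
  have finA: "finite A" unfolding A_def by simp
  have finB: "finite (B l)" if "l \<ge> 1" for l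
  proof -
    have "B l \<subseteq> {-(2 * int h)..2 * int h}"
    proof
      fix b assume "b \<in> B l"
      then have "\<bar>int l * b\<bar> \<le> 2 * int h" unfolding B_def by simp
      moreover have "\<bar>b\<bar> \<le> \<bar>int l * b\<bar>" using that by (simp add: abs_mult mult_le_cancel_right1)
      ultimately show "b \<in> {-(2 * int h)..2 * int h}" by auto
    qed
    then show ?thesis by (rule finite_subset) simp
  qed
  have symB: "-b \<in> B l" if "b \<in> B l" for b l using that unfolding B_def by simp
  have sa: "infsum (\<lambda>a. K a * Rf g N a) {a. a \<noteq> 0} = (\<Sum>a\<in>A. K a * Rf g N a)"
  proof -
    have "infsum (\<lambda>a. K a * Rf g N a) {a. a \<noteq> 0} = infsum (\<lambda>a. K a * Rf g N a) A"
      by (rule infsum_cong_neutral) (use Ksupp in \<open>auto simp: A_def\<close>)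
    then show ?thesis using finA by simp
  qed
  have sb: "infsum (\<lambda>a. K (a * int l) * eq q (real j * real_of_int a)) {a. a \<noteq> 0}
      = (\<Sum>b\<in>B l. K (b * int l) * eq q (real j * real_of_int b))" if l: "l \<ge> 1" for l q j
  proof -
    have "infsum (\<lambda>a. K (a * int l) * eq q (real j * real_of_int a)) {a. a \<noteq> 0}
      = infsum (\<lambda>a. K (a * int l) * eq q (real j * real_of_int a)) (B l)"
      by (rule infsum_cong_neutral) (use Ksupp in \<open>auto simp: B_def mult.commute\<close>)
    then show ?thesis using finB[OF l] by simp
  qed
  have pd: "posdivs a = {l\<in>{1..2*h}. int l dvd a}" if "a \<in> A" for a
  proof -
    have "int l \<le> 2 * int h" if "int l dvd a" for l
      using dvd_imp_le_int[of a "int l"] that \<open>a \<in> A\<close> unfolding A_def by auto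
    then show ?thesis unfolding posdivs_def by force
  qed
  have sc: "Rf g N a = (\<Sum>l\<in>{l\<in>{1..2*h}. int l dvd a}. \<Sum>p\<in>CP. T2 l a p)" if "a \<in> A" for a
    unfolding Rf_def pd[OF that] T2_def[symmetric]
  proof (intro sum.cong refl)
    fix l assume "l \<in> {l\<in>{1..2*h}. int l dvd a}"
    then have l: "l \<ge> 1" by simp
    show "infsum (T2 l a) cpairs = sum (T2 l a) CP"
      unfolding CP_def using l gz by (intro infsum_CP) (auto simp: T2_def)
  qed
  define X where "X l a = (\<Sum>p\<in>CP. T2 l a p)" for l a
  have "(\<Sum>a\<in>A. K a * Rf g N a) = (\<Sum>a\<in>A. \<Sum>l\<in>{1..2*h}. if int l dvd a then K a * X l a else 0)"
    by (intro sum.cong refl) (simp add: sc X_def sum_distrib_left sum.inter_filter[symmetric])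
  also have "\<dots> = (\<Sum>l\<in>{1..2*h}. \<Sum>a\<in>A. if int l dvd a then K a * X l a else 0)"
    by (rule sum.swap)
  also have "\<dots> = (\<Sum>l\<in>{1..2*h}. \<Sum>b\<in>B l. K (int l * b) * X l (int l * b))"
  proof (rule sum.cong[OF refl])
    fix l assume l: "l \<in> {1..2*h}"
    have inj: "inj_on (\<lambda>b. int l * b) (B l)" using l by (auto intro: inj_onI)
    have img: "(\<lambda>b. int l * b) ` B l = {a\<in>A. int l dvd a}"
    proof
      show "(\<lambda>b. int l * b) ` B l \<subseteq> {a\<in>A. int l dvd a}"
        using l by (auto simp: B_def A_def abs_le_iff)
      show "{a\<in>A. int l dvd a} \<subseteq> (\<lambda>b. int l * b) ` B l"
      proof
        fix a assume a: "a \<in> {a\<in>A. int l dvd a}"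
        then obtain b where b: "a = int l * b" by blast
        then have "b \<in> B l" using a by (auto simp: B_def A_def abs_le_iff)
        then show "a \<in> (\<lambda>b. int l * b) ` B l" using b by blast
      qed
    qed
    have "(\<Sum>a\<in>A. if int l dvd a then K a * X l a else 0) = (\<Sum>a\<in>{a\<in>A. int l dvd a}. K a * X l a)"
      using finA by (simp add: sum.inter_filter)
    also have "\<dots> = (\<Sum>b\<in>B l. K (int l * b) * X l (int l * b))"
      unfolding img[symmetric] by (simp add: sum.reindex[OF inj])
    finally show "(\<Sum>a\<in>A. if int l dvd a then K a * X l a else 0) = (\<Sum>b\<in>B l. K (int l * b) * X l (int l * b))" .
  qed
  also have "\<dots> = (\<Sum>l\<in>{1..2*h}.
                 infsum (\<lambda>(d,q). complex_of_real (g (l*d) * g (l*q) / real q) *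
                   (\<Sum>j\<in>{1..<q}. \<Sum>m\<in>mrange N l d.
                      complex_of_real (cos (2 * pi * real j * real d * real_of_int m / real q)) *
                      infsum (\<lambda>a. K (a * int l) * eq q (real j * real_of_int a)) {a. a \<noteq> 0})) cpairs)"
  proof (intro sum.cong refl)
    fix l assume lr: "l \<in> {1..2*h}"
    then have l: "l \<ge> 1" by simp
    define Z where "Z = (\<lambda>(d,q). complex_of_real (g (l*d) * g (l*q) / real q) *
                   (\<Sum>j\<in>{1..<q}. \<Sum>m\<in>mrange N l d.
                      complex_of_real (cos (2 * pi * real j * real d * real_of_int m / real q)) *
                      infsum (\<lambda>a. K (a * int l) * eq q (real j * real_of_int a)) {a. a \<noteq> 0}))"
    have "infsum Z cpairs = sum Z CP"
      unfolding CP_def using l gz by (intro infsum_CP) (auto simp: Z_def)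
    moreover have "(\<Sum>b\<in>B l. K (int l * b) * X l (int l * b)) = (\<Sum>p\<in>CP. \<Sum>b\<in>B l. K (int l * b) * T2 l (int l * b) p)"
      unfolding X_def by (simp add: sum_distrib_left sum.swap[of _ "B l"])
    moreover have "(\<Sum>b\<in>B l. K (int l * b) * T2 l (int l * b) p) = Z p" if p: "p \<in> CP" for p
    proof -
      obtain d q where pp: "p = (d,q)" by (cases p) auto
      have q: "q \<ge> 1" using p pp by (auto simp: CP_def cpairs_def)
      show ?thesis
        unfolding pp T2_def Z_def prod.case
        using inner[where B="B l" and K=K and l=l and q=q and c="complex_of_real (g (l*d) * g (l*q) / real q)"
             and R="mrange N l d" and d=d, OF symB Keven[rule_format] l q] sb[OF l]
        by simp
    qed
    ultimately show "(\<Sum>b\<in>B l. K (int l * b) * X l (int l * b)) = infsum Z cpairs" by simp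
  qed
  finally show ?thesis using sa by simp
qed


theorem lemma3:
  fixes N h Q :: nat and g f :: "nat \<Rightarrow> real"
  assumes g_supp: "\<forall>q>Q. g q = 0"
    and f_def: "\<forall>n>0. f n = (\<Sum>d | d dvd n. g d)"
  shows "(\<forall>a::int. a \<noteq> 0 \<and> a \<le> int N \<longrightarrow>
            complex_of_real (Cf f N a) =
              (\<Sum>l\<in>posdivs a.
                 infsum (\<lambda>(d,q). complex_of_real (g (l*d) * g (l*q) / real q *
                    real_of_int (\<lfloor>2 * real N / real (l*d)\<rfloor> - \<lfloor>real N / real (l*d)\<rfloor>))) cpairs)
              + Rf g N a)
       \<and> (\<forall>K::int \<Rightarrow> complex.
            (\<forall>a. K (-a) = K a) \<and> (\<forall>a. \<bar>a\<bar> > 2 * int h \<longrightarrow> K a = 0) \<and>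
            K 0 = 2 * of_nat h \<and> 2 * h \<le> N \<longrightarrow>
            infsum (\<lambda>a. K a * Rf g N a) {a. a \<noteq> 0} + K 0 * complex_of_real (Cf f N 0) =
              (\<Sum>l\<in>{1..2*h}.
                 infsum (\<lambda>(d,q). complex_of_real (g (l*d) * g (l*q) / real q) *
                   (\<Sum>j\<in>{1..<q}. \<Sum>m\<in>mrange N l d.
                      complex_of_real (cos (2 * pi * real j * real d * real_of_int m / real q)) *
                      infsum (\<lambda>a. K (a * int l) * eq q (real j * real_of_int a)) {a. a \<noteq> 0})) cpairs)
              + 2 * of_nat h * complex_of_real (Cf f N 0))"
proof -
  have P1: "\<forall>a::int. a \<noteq> 0 \<and> a \<le> int N \<longrightarrow>
            complex_of_real (Cf f N a) =
              (\<Sum>l\<in>posdivs a.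
                 infsum (\<lambda>(d,q). complex_of_real (g (l*d) * g (l*q) / real q *
                    real_of_int (\<lfloor>2 * real N / real (l*d)\<rfloor> - \<lfloor>real N / real (l*d)\<rfloor>))) cpairs)
              + Rf g N a"
    using part1[OF g_supp f_def] by blast
  show ?thesis
  proof (intro conjI P1 allI impI)
    fix K :: "int \<Rightarrow> complex"
    assume H: "(\<forall>a. K (-a) = K a) \<and> (\<forall>a. \<bar>a\<bar> > 2 * int h \<longrightarrow> K a = 0) \<and>
            K 0 = 2 * of_nat h \<and> 2 * h \<le> N"
    then have K0: "K 0 = 2 * of_nat h" by blast
    show "infsum (\<lambda>a. K a * Rf g N a) {a. a \<noteq> 0} + K 0 * complex_of_real (Cf f N 0) =
              (\<Sum>l\<in>{1..2*h}.
                 infsum (\<lambda>(d,q). complex_of_real (g (l*d) * g (l*q) / real q) *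
                   (\<Sum>j\<in>{1..<q}. \<Sum>m\<in>mrange N l d.
                      complex_of_real (cos (2 * pi * real j * real d * real_of_int m / real q)) *
                      infsum (\<lambda>a. K (a * int l) * eq q (real j * real_of_int a)) {a. a \<noteq> 0})) cpairs)
              + 2 * of_nat h * complex_of_real (Cf f N 0)"
      unfolding K0 using part2[OF g_supp, of K h N] H by simp
  qed
qed

end
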